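(* Let $F=\{f_i\}_{i=1}^N$ be a frame for $\mathcal H$. If $(F,S_F^{-1}F)\in\mathcal N^{(1)}$, then $\{S_F^{-1/2}f_i\}_{i=1}^N$ is an equal norm Parseval frame. In addition, if $G$ is any dual of $F$ with $(F,G)\in\mathcal N^{(1)}$, then $G=S_F^{-1}F$.
   Context: $\mathcal H$ is a complex Hilbert space of finite dimension $n$, inner product linear in the first argument, $N\ge n$. A finite sequence $F=\{f_i\}_{i=1}^N$ is a frame if there are $0<A\le B$ with $A\|f\|^2\le\sum_i|\langle f,f_i\rangle|^2\le B\|f\|^2$ for all $f$; Parseval if $\sum_i|\langle f,f_i\rangle|^2=\|f\|^2$ for all $f$; equal norm if $\|f_i\|$ is constant. $S_Ff=\sum_i\langle f,f_i\rangle f_i$ is the (positive invertible) frame operator, $S_F^{-1/2}$ its inverse positive square root, $S_F^{-1}F=\{S_F^{-1}f_i\}$ the canonical dual. $G=\{g_i\}_{i=1}^N$ is a dual of $F$ if $f=\sum_i\langle f,g_i\rangle f_i$ for all $f$; $(F,G)$ is then an $(N,n)$ dual pair. $E_{\Lambda,F,G}f=\sum_{i\in\Lambda}\langle f,f_i\rangle g_i$. The numerical radius is $\omega(T)=\sup\{|\langle Tf,f\rangle|:\|f\|=1\}$; $\eta^{(1)}_{F,G}=\max_{1\le i\le N}\omega(E_{\{i\},F,G})$; $\eta^{(1)}=\inf\{\eta^{(1)}_{F,G}:(F,G)\text{ an }(N,n)\text{ dual pair}\}$; $\mathcal N^{(1)}=\{(F,G):\eta^{(1)}_{F,G}=\eta^{(1)}\}$.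 *)

theory Defs
  imports "HOL-Analysis.Analysis"
begin

text \<open>The n-dimensional complex Hilbert space is modelled as complex^'n with n = CARD('n);
  inner product linear in the first argument. Frames are indexed by {..<N} (0-based).\<close>

definition cinner :: "complex^'n \<Rightarrow> complex^'n \<Rightarrow> complex" where
  "cinner x y = (\<Sum>j\<in>UNIV. x $ j * cnj (y $ j))"

definition is_frame :: "nat \<Rightarrow> (nat \<Rightarrow> complex^'n) \<Rightarrow> bool" where
  "is_frame N F \<longleftrightarrow> (\<exists>A B. 0 < A \<and> A \<le> B \<and>
     (\<forall>f. A * (norm f)^2 \<le> (\<Sum>i<N. (cmod (cinner f (F i)))^2) \<and>
          (\<Sum>i<N. (cmod (cinner f (F i)))^2) \<le> B * (norm f)^2))"

definition is_parseval :: "nat \<Rightarrow> (nat \<Rightarrow> complex^'n) \<Rightarrow> bool" where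
  "is_parseval N F \<longleftrightarrow> (\<forall>f. (\<Sum>i<N. (cmod (cinner f (F i)))^2) = (norm f)^2)"

definition is_equal_norm :: "nat \<Rightarrow> (nat \<Rightarrow> complex^'n) \<Rightarrow> bool" where
  "is_equal_norm N F \<longleftrightarrow> (\<forall>i<N. \<forall>j<N. norm (F i) = norm (F j))"

definition frame_op :: "nat \<Rightarrow> (nat \<Rightarrow> complex^'n) \<Rightarrow> complex^'n \<Rightarrow> complex^'n" where
  "frame_op N F f = (\<Sum>i<N. cinner f (F i) *s F i)"

definition frame_op_inv :: "nat \<Rightarrow> (nat \<Rightarrow> complex^'n) \<Rightarrow> complex^'n \<Rightarrow> complex^'n" where
  "frame_op_inv N F = inv (frame_op N F)"

definition clinear_op :: "(complex^'n \<Rightarrow> complex^'n) \<Rightarrow> bool" where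
  "clinear_op T \<longleftrightarrow> (\<forall>x y. T (x + y) = T x + T y) \<and> (\<forall>c x. T (c *s x) = c *s T x)"

definition positive_op :: "(complex^'n \<Rightarrow> complex^'n) \<Rightarrow> bool" where
  "positive_op T \<longleftrightarrow> clinear_op T \<and> (\<forall>x. Im (cinner (T x) x) = 0 \<and> 0 \<le> Re (cinner (T x) x))"

definition frame_op_inv_sqrt :: "nat \<Rightarrow> (nat \<Rightarrow> complex^'n) \<Rightarrow> complex^'n \<Rightarrow> complex^'n" where
  "frame_op_inv_sqrt N F = (THE R. positive_op R \<and> (\<forall>x. R (R x) = frame_op_inv N F x))"

definition is_dual :: "nat \<Rightarrow> (nat \<Rightarrow> complex^'n) \<Rightarrow> (nat \<Rightarrow> complex^'n) \<Rightarrow> bool" where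
  "is_dual N F G \<longleftrightarrow> (\<forall>f. f = (\<Sum>i<N. cinner f (G i) *s F i))"

definition dual_pair :: "nat \<Rightarrow> (nat \<Rightarrow> complex^'n) \<Rightarrow> (nat \<Rightarrow> complex^'n) \<Rightarrow> bool" where
  "dual_pair N F G \<longleftrightarrow> is_frame N F \<and> is_dual N F G"

definition E_op :: "nat set \<Rightarrow> (nat \<Rightarrow> complex^'n) \<Rightarrow> (nat \<Rightarrow> complex^'n) \<Rightarrow> complex^'n \<Rightarrow> complex^'n" where
  "E_op \<Lambda> F G f = (\<Sum>i\<in>\<Lambda>. cinner f (F i) *s G i)"

definition num_radius :: "(complex^'n \<Rightarrow> complex^'n) \<Rightarrow> real" where
  "num_radius T = (SUP f\<in>{f. norm f = 1}. cmod (cinner (T f) f))"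

definition eta1_FG :: "nat \<Rightarrow> (nat \<Rightarrow> complex^'n) \<Rightarrow> (nat \<Rightarrow> complex^'n) \<Rightarrow> real" where
  "eta1_FG N F G = Max ((\<lambda>i. num_radius (E_op {i} F G)) ` {..<N})"

definition eta1 :: "nat \<Rightarrow> ('n::finite) itself \<Rightarrow> real" where
  "eta1 N (_::'n itself) = Inf {eta1_FG N F G | (F :: nat \<Rightarrow> complex^'n) G. dual_pair N F G}"

definition in_N1 :: "nat \<Rightarrow> (nat \<Rightarrow> complex^'n) \<Rightarrow> (nat \<Rightarrow> complex^'n) \<Rightarrow> bool" where
  "in_N1 N F G \<longleftrightarrow> dual_pair N F G \<and> eta1_FG N F G = eta1 N TYPE('n)"

end

theory Submission
  imports Defs
begin


lemma cinner_add_left: "cinner (x + y) z = cinner x z + cinner y z"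
  by (simp add: cinner_def distrib_right sum.distrib)
lemma cinner_add_right: "cinner x (y + z) = cinner x y + cinner x z"
  by (simp add: cinner_def distrib_left sum.distrib)
lemma cinner_diff_left: "cinner (x - y) z = cinner x z - cinner y z"
  by (simp add: cinner_def left_diff_distrib sum_subtractf)
lemma cinner_diff_right: "cinner x (y - z) = cinner x y - cinner x z"
  by (simp add: cinner_def right_diff_distrib sum_subtractf)
lemma cinner_scale_left: "cinner (c *s x) y = c * cinner x y"
  by (simp add: cinner_def sum_distrib_left mult.assoc)
lemma cinner_scale_right: "cinner x (c *s y) = cnj c * cinner x y"
  by (simp add: cinner_def sum_distrib_left algebra_simps)
lemma cinner_sum_left: "finite A \<Longrightarrow> cinner (\<Sum>i\<in>A. f i) y = (\<Sum>i\<in>A. cinner (f i) y)"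
  unfolding cinner_def sum_component sum_distrib_right by (rule sum.swap)
lemma cinner_sum_right: "finite A \<Longrightarrow> cinner x (\<Sum>i\<in>A. f i) = (\<Sum>i\<in>A. cinner x (f i))"
  unfolding cinner_def sum_component cnj_sum sum_distrib_left by (rule sum.swap)
lemma cinner_commute: "cinner y x = cnj (cinner x y)"
  by (simp add: cinner_def mult.commute)
lemma cinner_zero_left[simp]: "cinner 0 y = 0" by (simp add: cinner_def)
lemma cinner_zero_right[simp]: "cinner x 0 = 0" by (simp add: cinner_def)

lemma norm_sq_vec: "(norm (x::complex^'n))^2 = (\<Sum>j\<in>UNIV. (cmod (x$j))^2)"
  by (simp add: norm_vec_def L2_set_def sum_nonneg)

lemma cinner_self: "cinner x x = complex_of_real ((norm x)^2)"
  unfolding norm_sq_vec cinner_def of_real_sum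
  by (rule sum.cong) (simp_all add: complex_mult_cnj cmod_power2)

lemma Re_cinner: "Re (cinner x y) = inner x y"
  by (simp add: cinner_def inner_vec_def Re_sum inner_complex_def)

lemma norm_smult_vec: "norm (c *s (x::complex^'n)) = cmod c * norm x"
proof -
  have "(norm (c *s x))^2 = (cmod c)^2 * (norm x)^2"
    unfolding norm_sq_vec by (simp add: power_mult_distrib norm_mult sum_distrib_left)
  hence "(norm (c *s x))^2 = (cmod c * norm x)^2" by (simp add: power_mult_distrib)
  thus ?thesis by (simp add: power2_eq_iff_nonneg)
qed

lemma cauchy_schwarz_c: "cmod (cinner x y) \<le> norm x * norm y"
proof (cases "cinner x y = 0")
  case True thus ?thesis by simp
next
  case False
  define u where "u = cnj (cinner x y) / cmod (cinner x y)"
  have cu: "cmod u = 1" using False by (simp add: u_def norm_divide)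
  have "cinner (u *s x) y = complex_of_real (cmod (cinner x y))"
  proof -
    have "cnj (cinner x y) * cinner x y = complex_of_real (cmod (cinner x y)) * complex_of_real (cmod (cinner x y))"
      using complex_norm_square[of "cinner x y"] by (simp add: power2_eq_square mult.commute)
    thus ?thesis using False by (simp add: cinner_scale_left u_def)
  qed
  hence "cmod (cinner x y) = inner (u *s x) y" by (simp add: Re_cinner[symmetric])
  also have "\<dots> \<le> norm (u *s x) * norm y" by (rule Cauchy_Schwarz_ineq2[THEN order_trans[OF abs_ge_self]])
  also have "\<dots> = norm x * norm y" by (simp add: norm_smult_vec cu)
  finally show ?thesis .
qed


lemma E_single: "E_op {i} F G = (\<lambda>f. cinner f (F i) *s G i)"
  by (rule ext) (simp add: E_op_def)

lemma cinner_rank1: "cinner (cinner f a *s b) f = cinner f a * cinner b f"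
  by (simp add: cinner_scale_left)

lemma norm_axis_c: "norm (axis k (1::complex) :: complex^'n) = 1"
proof -
  have "(norm (axis k (1::complex) :: complex^'n))^2 = 1"
    unfolding norm_sq_vec axis_def vec_lambda_beta
    by (subst sum.cong[OF refl, of _ _ "\<lambda>j. if j = k then 1 else 0"]) auto
  thus ?thesis by (simp add: power2_eq_1_iff)
qed

lemma unit_exists: "\<exists>v::complex^'n. norm v = 1"
  using norm_axis_c by blast

lemma r1_bdd: "bdd_above ((\<lambda>f. cmod (cinner (cinner f a *s b) f)) ` {f::complex^'n. norm f = 1})"
proof (rule bdd_aboveI2)
  fix f :: "complex^'n" assume "f \<in> {f. norm f = 1}"
  hence f1: "norm f = 1" by simp
  have "cmod (cinner (cinner f a *s b) f) = cmod (cinner f a) * cmod (cinner b f)"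
    by (simp add: cinner_rank1 norm_mult)
  also have "\<dots> \<le> (norm f * norm a) * (norm b * norm f)"
    by (intro mult_mono cauchy_schwarz_c) auto
  finally show "cmod (cinner (cinner f a *s b) f) \<le> norm a * norm b" using f1 by simp
qed

lemma r1_ge: "norm v = 1 \<Longrightarrow> cmod (cinner v a * cinner b v) \<le> num_radius (\<lambda>f::complex^'n. cinner f a *s b)"
  unfolding num_radius_def
  using cSUP_upper[OF _ r1_bdd, of v a b] by (simp add: cinner_rank1)

lemma r1_ge2:
  assumes "v \<noteq> 0"
  shows "cmod (cinner v a * cinner b v) / (norm v)^2 \<le> num_radius (\<lambda>f::complex^'n. cinner f a *s b)"
proof -
  define u where "u = complex_of_real (1 / norm v) *s v"
  have nu: "norm u = 1" using assms by (simp add: u_def norm_smult_vec norm_divide)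
  have "cinner u a * cinner b u = complex_of_real (1 / (norm v)^2) * (cinner v a * cinner b v)"
    by (simp add: u_def cinner_scale_left cinner_scale_right power2_eq_square)
  hence "cmod (cinner u a * cinner b u) = cmod (cinner v a * cinner b v) / (norm v)^2"
    by (simp add: norm_mult norm_divide norm_power)
  with r1_ge[OF nu, of a b] show ?thesis by simp
qed

lemma r1_le:
  assumes "\<And>v. norm v = 1 \<Longrightarrow> cmod (cinner v a * cinner b v) \<le> M"
  shows "num_radius (\<lambda>f::complex^'n. cinner f a *s b) \<le> M"
  unfolding num_radius_def
proof (rule cSUP_least)
  show "{f::complex^'n. norm f = 1} \<noteq> {}" using unit_exists by auto
  fix x :: "complex^'n" assume "x \<in> {f. norm f = 1}"
  thus "cmod (cinner (cinner x a *s b) x) \<le> M" using assms by (simp add: cinner_rank1)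
qed

lemma r1_nonneg: "0 \<le> num_radius (\<lambda>f::complex^'n. cinner f a *s b)"
  using unit_exists r1_ge by (metis norm_ge_zero order_trans)


lemma rank1_eq:
  fixes a b :: "complex^'n"
  assumes r: "r > 0" and ab: "cinner a b = complex_of_real r"
    and nr: "num_radius (\<lambda>f. cinner f a *s b) \<le> r"
  shows "a \<noteq> 0 \<and> b = complex_of_real (r / (norm a)^2) *s a"
proof -
  have a0: "a \<noteq> 0" using ab r by auto
  have b0: "b \<noteq> 0" using ab r by auto
  have na: "norm a > 0" and nb: "norm b > 0" using a0 b0 by auto
  have ba: "cinner b a = complex_of_real r" using ab by (simp add: cinner_commute[of b a])
  have aa: "cinner a a = complex_of_real ((norm a)^2)" by (rule cinner_self)
  have bb: "cinner b b = complex_of_real ((norm b)^2)" by (rule cinner_self)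
  define p where "p = norm a * norm b"
  have p0: "p > 0" using na nb by (simp add: p_def)
  define v where "v = complex_of_real (norm b) *s a + complex_of_real (norm a) *s b"
  have va: "cinner v a = complex_of_real (norm a * (p + r))"
    by (simp add: v_def cinner_add_left cinner_scale_left aa ba p_def power2_eq_square algebra_simps)
  have bv: "cinner b v = complex_of_real (norm b * (p + r))"
    by (simp add: v_def cinner_add_right cinner_scale_right bb ba p_def power2_eq_square algebra_simps)
  have vv: "cinner v v = complex_of_real (2 * p * (p + r))"
    by (simp add: v_def cinner_add_right cinner_add_left cinner_scale_right cinner_scale_left
        aa bb ab ba p_def power2_eq_square algebra_simps)
  have nv: "(norm v)^2 = 2 * p * (p + r)"
    using vv by (simp only: cinner_self of_real_eq_iff)
  have v0: "v \<noteq> 0" using nv p0 r by (auto simp: add_pos_pos)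
  have "cmod (cinner v a * cinner b v) / (norm v)^2 \<le> r"
    using r1_ge2[OF v0, of a b] nr by linarith
  moreover have "cmod (cinner v a * cinner b v) = p * (p + r) * (p + r)"
  proof -
    have "cinner v a * cinner b v = complex_of_real (p * (p + r) * (p + r))"
      by (simp add: va bv p_def algebra_simps)
    thus ?thesis using p0 r by (simp only: norm_of_real) simp
  qed
  ultimately have "p * (p + r) * (p + r) / (2 * p * (p + r)) \<le> r" by (simp add: nv)
  moreover have "p * (p + r) * (p + r) / (2 * p * (p + r)) = (p + r) / 2"
  proof -
    have d: "2 * p * (p + r) \<noteq> 0" using p0 r by simp
    have "p * (p + r) * (p + r) = (p + r) / 2 * (2 * p * (p + r))" by simp
    thus ?thesis using d by simp
  qed
  ultimately have pr: "p \<le> r" by simp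
  define c where "c = r / (norm a)^2"
  define w where "w = b - complex_of_real c *s a"
  have ww: "cinner w w = complex_of_real ((norm b)^2 - 2 * c * r + c^2 * (norm a)^2)"
    by (simp add: w_def cinner_diff_right cinner_diff_left cinner_scale_right cinner_scale_left
        aa bb ab ba power2_eq_square algebra_simps)
  have "c^2 * (norm a)^2 = c * r" using na by (simp add: c_def power2_eq_square)
  hence "(norm w)^2 = (norm b)^2 - c * r"
  proof -
    have "(norm w)^2 = (norm b)^2 - 2 * c * r + c^2 * (norm a)^2"
      using ww by (simp only: cinner_self of_real_eq_iff)
    thus ?thesis using \<open>c^2 * (norm a)^2 = c * r\<close> by linarith
  qed
  moreover have "(norm b)^2 \<le> c * r"
  proof -
    have "(norm a * norm b)^2 \<le> r^2" using pr p0 unfolding p_def by (intro power_mono) auto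
    thus ?thesis using na by (simp add: c_def field_simps power2_eq_square power_mult_distrib)
  qed
  ultimately have "(norm w)^2 \<le> 0" by simp
  hence "w = 0" by simp
  thus ?thesis using a0 by (simp add: w_def c_def)
qed



lemma cinner_axis: "cinner (axis k 1) y = cnj (y $ k)"
proof -
  have "cinner (axis k 1) y = (\<Sum>j\<in>UNIV. if j = k then cnj (y $ k) else 0)"
    unfolding cinner_def axis_def by (rule sum.cong) auto
  thus ?thesis by simp
qed

lemma dual_trace:
  fixes F G :: "nat \<Rightarrow> complex^'n"
  assumes "is_dual N F G"
  shows "(\<Sum>i<N. cinner (F i) (G i)) = of_nat CARD('n)"
proof -
  have k: "(\<Sum>i<N. F i $ k * cnj (G i $ k)) = 1" for k
  proof -
    have "axis k (1::complex) = (\<Sum>i<N. cinner (axis k 1) (G i) *s F i)"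
      using assms unfolding is_dual_def by blast
    hence "(axis k (1::complex)) $ k = (\<Sum>i<N. cinner (axis k 1) (G i) *s F i) $ k" by simp
    thus ?thesis by (simp add: cinner_axis mult.commute)
  qed
  have "(\<Sum>i<N. cinner (F i) (G i)) = (\<Sum>k\<in>(UNIV::'n set). \<Sum>i<N. F i $ k * cnj (G i $ k))"
    unfolding cinner_def by (rule sum.swap)
  also have "\<dots> = of_nat CARD('n)" by (simp add: k)
  finally show ?thesis .
qed

lemma avg_eq:
  fixes s :: "nat \<Rightarrow> complex"
  assumes sum: "(\<Sum>i<N. s i) = of_real (real N * r)"
    and le: "\<And>i. i < N \<Longrightarrow> cmod (s i) \<le> r"
    and i: "i < N"
  shows "s i = of_real r"
proof -
  have "(\<Sum>i<N. Re (s i)) = real N * r" using arg_cong[OF sum, of Re] by (simp add: Re_sum)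
  hence z: "(\<Sum>i<N. r - Re (s i)) = 0" by (simp add: sum_subtractf)
  have nn: "\<And>i. i < N \<Longrightarrow> 0 \<le> r - Re (s i)" using le complex_Re_le_cmod order_trans by fastforce
  hence "r - Re (s i) = 0" using z i sum_nonneg_eq_0_iff[of "{..<N}" "\<lambda>i. r - Re (s i)"] by auto
  hence re: "Re (s i) = r" by simp
  have "(cmod (s i))^2 \<le> r^2" using le[OF i] by (simp add: power_mono)
  hence "(Im (s i))^2 \<le> 0" using re by (simp add: cmod_power2)
  hence "Im (s i) = 0" by simp
  with re show ?thesis by (simp add: complex_eq_iff)
qed



lemma roots_sum:
  fixes d :: int
  assumes N: "N > 0" and d0: "d \<noteq> 0" and dl: "\<bar>d\<bar> < int N"
  shows "(\<Sum>i<N. cis (real i * (2 * pi * of_int d / real N))) = 0"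
proof -
  define \<theta> where "\<theta> = 2 * pi * of_int d / real N"
  define z where "z = cis \<theta>"
  have zi: "z ^ i = cis (real i * \<theta>)" for i by (simp add: z_def Complex.DeMoivre)
  have "z ^ N = cis (2 * pi * of_int d)" using N by (simp add: zi \<theta>_def)
  hence zN: "z ^ N = 1" by (simp add: cis_multiple_2pi)
  have z1: "z \<noteq> 1"
  proof
    assume "z = 1"
    hence "exp (\<i> * complex_of_real \<theta>) = 1" by (simp add: z_def cis_conv_exp)
    then obtain n :: int where "Im (\<i> * complex_of_real \<theta>) = of_int (2 * n) * pi"
      by (auto simp: exp_eq_1)
    hence "\<theta> = 2 * of_int n * pi" by simp
    hence "2 * pi * of_int d / real N = 2 * pi * of_int n" by (simp add: \<theta>_def)
    hence "of_int d = real N * of_int n" using N by (simp add: field_simps)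
    hence dn: "d = int N * n" by (metis of_int_eq_iff of_int_mult of_int_of_nat_eq)
    hence "n \<noteq> 0" using d0 by auto
    hence "\<bar>d\<bar> \<ge> int N" using dn by (simp add: abs_mult mult_le_cancel_left1 N)
    thus False using dl by simp
  qed
  have "(\<Sum>i<N. cis (real i * \<theta>)) = (\<Sum>i<N. z ^ i)" by (simp add: zi)
  also have "\<dots> = 0" using z1 zN by (simp add: geometric_sum)
  finally show ?thesis by (simp add: \<theta>_def)
qed

definition idx :: "'n::finite \<Rightarrow> nat" where
  "idx = (SOME h. bij_betw h (UNIV::'n set) {0..<CARD('n)})"

lemma idx_bij: "bij_betw (idx :: 'n::finite \<Rightarrow> nat) UNIV {0..<CARD('n)}"
proof -
  have "\<exists>h. bij_betw h (UNIV::'n set) {0..<CARD('n)}" by (rule ex_bij_betw_finite_nat) simp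
  thus ?thesis unfolding idx_def by (rule someI_ex)
qed

lemma idx_inj: "idx (j::'n::finite) = idx k \<Longrightarrow> j = k"
  using idx_bij bij_betw_imp_inj_on by (metis UNIV_I inj_onD)

lemma idx_lt: "idx (j::'n::finite) < CARD('n)"
  using idx_bij bij_betwE by fastforce

definition hfr :: "nat \<Rightarrow> nat \<Rightarrow> complex^'n::finite" where
  "hfr N i = (\<chi> j. complex_of_real (1 / sqrt (real N)) * cis (real i * (2 * pi * real (idx j) / real N)))"

lemma hfr_prod:
  "cnj (hfr N i $ j) * hfr N i $ k
     = complex_of_real (1 / real N) * cis (real i * (2 * pi * of_int (int (idx k) - int (idx j)) / real N))"
proof -
  have "cnj (hfr N i $ j) * hfr N i $ k =
    complex_of_real (1 / sqrt (real N) * (1 / sqrt (real N))) *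
      (cis (- (real i * (2 * pi * real (idx j) / real N))) * cis (real i * (2 * pi * real (idx k) / real N)))"
  proof -
    have sq: "complex_of_real (sqrt (real N)) * complex_of_real (sqrt (real N)) = of_nat N"
      by (simp only: of_real_mult[symmetric] real_sqrt_mult_self) simp
    show ?thesis by (simp add: hfr_def cis_cnj sq)
  qed
  also have "\<dots> = complex_of_real (1 / real N) * cis (real i * (2 * pi * of_int (int (idx k) - int (idx j)) / real N))"
    by (simp add: cis_mult algebra_simps diff_divide_distrib)
  finally show ?thesis .
qed

lemma hfr_kernel:
  assumes "CARD('n::finite) \<le> N"
  shows "(\<Sum>i<N. cnj (hfr N i $ (j::'n)) * hfr N i $ k) = (if j = k then 1 else 0)"
proof -
  have "0 < CARD('n)" by simp
  hence N: "N > 0" using assms by linarith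
  show ?thesis
  proof (cases "j = k")
    case True
    thus ?thesis using N by (simp add: hfr_prod)
  next
    case False
    define d where "d = int (idx k) - int (idx j)"
    have d0: "d \<noteq> 0" using False idx_inj unfolding d_def by fastforce
    have dl: "\<bar>d\<bar> < int N" using idx_lt[of j] idx_lt[of k] assms unfolding d_def by linarith
    have "(\<Sum>i<N. cnj (hfr N i $ j) * hfr N i $ k)
        = complex_of_real (1 / real N) * (\<Sum>i<N. cis (real i * (2 * pi * of_int d / real N)))"
      by (simp add: hfr_prod sum_distrib_left d_def)
    also have "\<dots> = 0" using roots_sum[OF N d0 dl] by simp
    finally show ?thesis using False by simp
  qed
qed

lemma hfr_dual:
  assumes "CARD('n::finite) \<le> N"
  shows "is_dual N (hfr N) (hfr N :: nat \<Rightarrow> complex^'n)"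
  unfolding is_dual_def
proof
  fix x :: "complex^'n"
  have "(\<Sum>i<N. cinner x (hfr N i) *s hfr N i) $ k = x $ k" for k
  proof -
    have "(\<Sum>i<N. cinner x (hfr N i) *s hfr N i) $ k
        = (\<Sum>i<N. \<Sum>j\<in>UNIV. x $ j * (cnj (hfr N i $ j) * hfr N i $ k))"
      by (simp add: cinner_def sum_distrib_right mult.assoc)
    also have "\<dots> = (\<Sum>j\<in>UNIV. x $ j * (\<Sum>i<N. cnj (hfr N i $ j) * hfr N i $ k))"
      by (subst sum.swap) (simp add: sum_distrib_left)
    also have "\<dots> = (\<Sum>j\<in>UNIV. if j = k then x $ k else 0)"
      by (rule sum.cong) (auto simp: hfr_kernel[OF assms])
    also have "\<dots> = x $ k" by simp
    finally show ?thesis .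
  qed
  thus "x = (\<Sum>i<N. cinner x (hfr N i) *s hfr N i)" by (simp add: vec_eq_iff)
qed

lemma hfr_norm:
  assumes "N > 0"
  shows "(norm (hfr N i :: complex^'n::finite))^2 = real CARD('n) / real N"
proof -
  have "(norm (hfr N i :: complex^'n))^2 = (\<Sum>j\<in>(UNIV::'n set). 1 / real N)"
    unfolding norm_sq_vec by (rule sum.cong) (auto simp: hfr_def norm_mult norm_divide power_divide power_mult_distrib)
  thus ?thesis by simp
qed



lemma dual_parseval:
  assumes "is_dual N H H"
  shows "is_parseval N H"
  unfolding is_parseval_def
proof
  fix x
  have "cinner x x = cinner x (\<Sum>i<N. cinner x (H i) *s H i)"
  proof -
    have ex: "x = (\<Sum>i<N. cinner x (H i) *s H i)" using assms unfolding is_dual_def by blast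
    show ?thesis using arg_cong[OF ex, of "cinner x"] .
  qed
  also have "\<dots> = (\<Sum>i<N. complex_of_real ((cmod (cinner x (H i)))^2))"
    unfolding cinner_sum_right[OF finite_lessThan] cinner_scale_right
    by (rule sum.cong, simp, subst complex_norm_square, simp add: mult.commute)
  finally have "complex_of_real ((norm x)^2) = complex_of_real (\<Sum>i<N. (cmod (cinner x (H i)))^2)"
    by (simp add: cinner_self)
  thus "(\<Sum>i<N. (cmod (cinner x (H i)))^2) = (norm x)^2" by (simp only: of_real_eq_iff)
qed

lemma parseval_frame: "is_parseval N H \<Longrightarrow> is_frame N H"
  unfolding is_parseval_def is_frame_def by (rule exI[of _ 1], rule exI[of _ 1]) simp

lemma eta1_FG_ge:
  assumes "i < N"
  shows "num_radius (E_op {i} F G) \<le> eta1_FG N F G"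
  unfolding eta1_FG_def using assms by (intro Max_ge) auto

lemma eta1_FG_nonneg:
  assumes "0 < N"
  shows "0 \<le> eta1_FG N F G"
proof -
  have "0 \<le> num_radius (E_op {0} F G)" unfolding E_single by (rule r1_nonneg)
  thus ?thesis using eta1_FG_ge[OF assms, of F G] by linarith
qed

lemma eta1_le:
  assumes card: "CARD('n::finite) \<le> N"
  shows "eta1 N TYPE('n) \<le> real CARD('n) / real N"
proof -
  have "0 < CARD('n)" by simp
  hence N: "N > 0" using card by linarith
  define H where "H = (hfr N :: nat \<Rightarrow> complex^'n)"
  have dH: "is_dual N H H" unfolding H_def by (rule hfr_dual[OF card])
  have dp: "dual_pair N H H" unfolding dual_pair_def using dH dual_parseval parseval_frame by blast
  have "eta1_FG N H H \<le> real CARD('n) / real N"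
    unfolding eta1_FG_def
  proof (rule Max.boundedI)
    show "finite ((\<lambda>i. num_radius (E_op {i} H H)) ` {..<N})" by simp
    show "(\<lambda>i. num_radius (E_op {i} H H)) ` {..<N} \<noteq> {}" using N by auto
    fix a assume "a \<in> (\<lambda>i. num_radius (E_op {i} H H)) ` {..<N}"
    then obtain i where a: "a = num_radius (E_op {i} H H)" by blast
    show "a \<le> real CARD('n) / real N" unfolding a
      unfolding E_single
    proof (rule r1_le)
      fix v :: "complex^'n" assume v: "norm v = 1"
      have "cmod (cinner v (H i) * cinner (H i) v) = (cmod (cinner v (H i)))^2"
        by (simp add: cinner_commute[of "H i" v] norm_mult power2_eq_square)
      also have "\<dots> \<le> (norm v * norm (H i))^2"
        by (intro power_mono cauchy_schwarz_c) simp
      also have "\<dots> = real CARD('n) / real N" using v hfr_norm[OF N] by (simp add: H_def)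
      finally show "cmod (cinner v (H i) * cinner (H i) v) \<le> real CARD('n) / real N" .
    qed
  qed
  moreover have "eta1 N TYPE('n) \<le> eta1_FG N H H"
    unfolding eta1_def
  proof (rule cInf_lower)
    show "eta1_FG N H H \<in> {eta1_FG N F G |(F :: nat \<Rightarrow> complex^'n) G. dual_pair N F G}"
      using dp by blast
    show "bdd_below {eta1_FG N F G |(F :: nat \<Rightarrow> complex^'n) G. dual_pair N F G}"
      by (rule bdd_belowI[of _ 0]) (auto intro: eta1_FG_nonneg[OF N])
  qed
  ultimately show ?thesis by linarith
qed



lemma sigma_le:
  fixes a b :: "complex^'n"
  shows "cmod (cinner a b) \<le> num_radius (\<lambda>f. cinner f a *s b)"
proof (cases "a = 0")
  case True thus ?thesis using r1_nonneg[of a b] by simp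
next
  case False
  have "cmod (cinner a a * cinner b a) / (norm a)^2 \<le> num_radius (\<lambda>f. cinner f a *s b)"
    by (rule r1_ge2[OF False])
  moreover have "cmod (cinner a a * cinner b a) / (norm a)^2 = cmod (cinner a b)"
    using False by (simp add: cinner_self cinner_commute[of b a] norm_mult norm_power)
  ultimately show ?thesis by simp
qed

lemma N1_struct:
  fixes F G :: "nat \<Rightarrow> complex^'n::finite"
  assumes card: "CARD('n) \<le> N" and N1: "in_N1 N F G" and i: "i < N"
  shows "F i \<noteq> 0 \<and> G i = complex_of_real ((real CARD('n) / real N) / (norm (F i))^2) *s F i"
proof -
  define r where "r = real CARD('n) / real N"
  have "0 < CARD('n)" by simp
  hence N: "N > 0" using card by linarith
  have r0: "r > 0" using N \<open>0 < CARD('n)\<close> by (simp add: r_def)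
  have dp: "dual_pair N F G" and eq: "eta1_FG N F G = eta1 N TYPE('n)"
    using N1 unfolding in_N1_def by auto
  have etaF: "eta1_FG N F G \<le> r" using eq eta1_le[OF card] by (simp add: r_def)
  have le: "cmod (cinner (F j) (G j)) \<le> r" if j: "j < N" for j
  proof -
    have "cmod (cinner (F j) (G j)) \<le> num_radius (E_op {j} F G)"
      unfolding E_single by (rule sigma_le)
    also have "\<dots> \<le> eta1_FG N F G" by (rule eta1_FG_ge[OF j])
    finally show ?thesis using etaF by linarith
  qed
  have tr: "(\<Sum>j<N. cinner (F j) (G j)) = complex_of_real (real N * r)"
    using dual_trace[of N F G] dp N unfolding dual_pair_def by (simp add: r_def)
  have si: "cinner (F i) (G i) = complex_of_real r" by (rule avg_eq[OF tr le i])
  have nr: "num_radius (\<lambda>f. cinner f (F i) *s G i) \<le> r"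
    using eta1_FG_ge[OF i, of F G] etaF unfolding E_single by linarith
  show ?thesis using rank1_eq[OF r0 si nr] by (simp add: r_def)
qed




lemma clin_zero: "clinear_op L \<Longrightarrow> L 0 = 0"
  unfolding clinear_op_def by (metis add_cancel_right_right add_0)

lemma clin_sum:
  assumes L: "clinear_op L" and A: "finite A"
  shows "L (\<Sum>i\<in>A. f i) = (\<Sum>i\<in>A. L (f i))"
  using A by (induct A rule: finite_induct) (auto simp: clin_zero[OF L] L[unfolded clinear_op_def])

lemma clin_expand:
  fixes N :: nat
  assumes L: "clinear_op L" and ex: "x = (\<Sum>i<N. a i * cinner x (F i) *s F i)"
  shows "L x = (\<Sum>i<N. a i * cinner x (F i) *s L (F i))"
proof -
  have "L x = L (\<Sum>i<N. a i * cinner x (F i) *s F i)" using ex by (rule arg_cong)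
  also have "\<dots> = (\<Sum>i<N. L (a i * cinner x (F i) *s F i))" using clin_sum[OF L finite_lessThan, of "\<lambda>i. a i * cinner x (F i) *s F i"] by simp
  also have "\<dots> = (\<Sum>i<N. a i * cinner x (F i) *s L (F i))"
    using L unfolding clinear_op_def by simp
  finally show ?thesis .
qed

lemma scaleR_vec_c: "(a::real) *\<^sub>R (x::complex^'n) = complex_of_real a *s x"
proof (rule iffD2[OF vec_eq_iff], rule allI)
  fix i show "(a *\<^sub>R x)$i = (complex_of_real a *s x)$i"
    by (subst vector_scaleR_component, subst vector_smult_component, rule scaleR_conv_of_real)
qed

lemma clin_linear: "clinear_op L \<Longrightarrow> linear L"
  by (rule linearI) (simp_all add: clinear_op_def scaleR_vec_c)

lemma frame_op_clinear: "clinear_op (frame_op N F)"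
  unfolding clinear_op_def frame_op_def
  by (simp add: cinner_add_left cinner_scale_left scaleR_add_left sum.distrib vector_add_ldistrib
      vec_eq_iff sum_distrib_left distrib_right mult.assoc)

lemma frame_op_adj: "cinner (frame_op N F x) y = cinner x (frame_op N F y)"
proof -
  have "cinner (frame_op N F x) y = (\<Sum>i<N. cinner x (F i) * cinner (F i) y)"
    unfolding frame_op_def by (simp add: cinner_sum_left cinner_scale_left)
  also have "\<dots> = (\<Sum>i<N. cinner x (cinner y (F i) *s F i))"
    by (rule sum.cong, simp, simp add: cinner_scale_right, subst cinner_commute[of "F _" y], simp add: mult.commute)
  also have "\<dots> = cinner x (frame_op N F y)"
    unfolding frame_op_def by (simp add: cinner_sum_right)
  finally show ?thesis .
qed

lemma frame_op_quad: "cinner (frame_op N F x) x = complex_of_real (\<Sum>i<N. (cmod (cinner x (F i)))^2)"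
proof -
  have "cinner (frame_op N F x) x = (\<Sum>i<N. cinner x (F i) * cinner (F i) x)"
    unfolding frame_op_def by (simp add: cinner_sum_left cinner_scale_left)
  also have "\<dots> = (\<Sum>i<N. complex_of_real ((cmod (cinner x (F i)))^2))"
    by (rule sum.cong, simp, subst cinner_commute[of "F _" x], subst complex_norm_square, simp)
  finally show ?thesis by (simp only: of_real_sum)
qed

lemma frame_op_inj:
  assumes "is_frame N F"
  shows "inj (frame_op N F)"
proof -
  obtain A B where A: "0 < A" and lo: "\<And>f. A * (norm f)^2 \<le> (\<Sum>i<N. (cmod (cinner f (F i)))^2)"
    using assms unfolding is_frame_def by blast
  have "x = 0" if "frame_op N F x = 0" for x
  proof -
    have q0: "cinner (frame_op N F x) x = 0" using that by simp
    have "complex_of_real (\<Sum>i<N. (cmod (cinner x (F i)))^2) = 0"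
      by (rule trans[OF sym[OF frame_op_quad[of N F x]] q0])
    hence "(\<Sum>i<N. (cmod (cinner x (F i)))^2) = 0" by (simp only: of_real_eq_0_iff)
    hence "A * (norm x)^2 \<le> 0" using lo[of x] by simp
    hence "(norm x)^2 \<le> 0" using A by (simp add: mult_le_0_iff)
    thus ?thesis by simp
  qed
  thus ?thesis using linear_injective_0[OF clin_linear[OF frame_op_clinear]] by blast
qed

lemma frame_op_bij:
  assumes "is_frame N F"
  shows "bij (frame_op N F)"
  using frame_op_inj[OF assms] linear_injective_imp_surjective[OF clin_linear[OF frame_op_clinear]]
  by (simp add: bij_def)



lemma smult_sum: "(c::complex) *s (\<Sum>i\<in>A. f i) = (\<Sum>i\<in>A. c *s f i)"
  by (simp add: vec_eq_iff sum_distrib_left)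

lemma clin_diff:
  assumes "clinear_op L" shows "L (x - y) = L x - L y"
proof -
  have "L (x - y) + L y = L x" using assms unfolding clinear_op_def by (metis diff_add_cancel)
  thus ?thesis by (simp add: eq_diff_eq)
qed

theorem theorem5p3:
  fixes N :: nat and F :: "nat \<Rightarrow> complex^'n"
  assumes "CARD('n) \<le> N"
    and "is_frame N F"
    and "in_N1 N F (\<lambda>i. frame_op_inv N F (F i))"
  shows "is_frame N (\<lambda>i. frame_op_inv_sqrt N F (F i))
       \<and> is_parseval N (\<lambda>i. frame_op_inv_sqrt N F (F i))
       \<and> is_equal_norm N (\<lambda>i. frame_op_inv_sqrt N F (F i))
       \<and> (\<forall>G. in_N1 N F G \<longrightarrow> (\<forall>i<N. G i = frame_op_inv N F (F i)))"
proof -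
  note card = assms(1) and fr = assms(2) and N1 = assms(3)
  define r where "r = real CARD('n) / real N"
  define S where "S = frame_op N F"
  define Si where "Si = frame_op_inv N F"
  define G0 where "G0 = (\<lambda>i. Si (F i))"
  define c where "c = (\<lambda>i. r / (norm (F i))^2)"
  have "0 < CARD('n)" by simp
  hence N: "N > 0" using card by linarith
  have r0: "r > 0" using N \<open>0 < CARD('n)\<close> by (simp add: r_def)
  have struct: "F i \<noteq> 0 \<and> G0 i = complex_of_real (c i) *s F i" if "i < N" for i
    using N1_struct[OF card N1 that] by (simp add: G0_def Si_def c_def r_def)
  have c0: "c i > 0" if "i < N" for i
    using struct[OF that] r0 by (simp add: c_def)
  have Slin: "clinear_op S" unfolding S_def by (rule frame_op_clinear)
  have bijS: "bij S" unfolding S_def by (rule frame_op_bij[OF fr])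
  have SiS: "Si (S y) = y" for y
    unfolding Si_def frame_op_inv_def S_def[symmetric] using bijS by (simp add: bij_is_inj)
  have SSi: "S (Si y) = y" for y
    unfolding Si_def frame_op_inv_def S_def[symmetric] using bijS by (simp add: bij_is_surj surj_f_inv_f)
  have SG0: "S (complex_of_real (c i) *s F i) = F i" if "i < N" for i
    using SSi[of "F i"] struct[OF that] by (simp add: G0_def)
  have SF: "S (F i) = complex_of_real (1 / c i) *s F i" if i: "i < N" for i
  proof -
    have "complex_of_real (c i) *s S (F i) = F i"
      using SG0[OF i] Slin unfolding clinear_op_def by simp
    hence "complex_of_real (1 / c i) *s (complex_of_real (c i) *s S (F i)) = complex_of_real (1 / c i) *s F i"
      by simp
    thus ?thesis using c0[OF i] by (simp add: of_real_divide)
  qed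
  have dualx: "x = (\<Sum>i<N. complex_of_real (c i) * cinner x (F i) *s F i)" for x
  proof -
    have "is_dual N F G0" using N1 unfolding in_N1_def dual_pair_def G0_def Si_def by blast
    hence "x = (\<Sum>i<N. cinner x (G0 i) *s F i)" unfolding is_dual_def by blast
    also have "\<dots> = (\<Sum>i<N. complex_of_real (c i) * cinner x (F i) *s F i)"
      by (rule sum.cong) (simp_all add: struct cinner_scale_right)
    finally show ?thesis .
  qed
  have orth: "cinner (F k) (F i) = 0" if i: "i < N" and k: "k < N" and ne: "c i \<noteq> c k" for i k
  proof -
    have "cinner (S (F k)) (F i) = cinner (F k) (S (F i))" unfolding S_def by (rule frame_op_adj)
    hence "complex_of_real (1 / c k) * cinner (F k) (F i) = complex_of_real (1 / c i) * cinner (F k) (F i)"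
      by (simp add: SF[OF i] SF[OF k] cinner_scale_left cinner_scale_right)
    hence "complex_of_real (1 / c k - 1 / c i) * cinner (F k) (F i) = 0"
      by (simp add: left_diff_distrib)
    moreover have "1 / c k - 1 / c i \<noteq> 0" using ne c0[OF i] c0[OF k] by (simp add: field_simps)
    ultimately show ?thesis by simp
  qed
  define R where "R = (\<lambda>x. \<Sum>i<N. complex_of_real (c i * sqrt (c i)) * cinner x (F i) *s F i)"
  have Rlin: "clinear_op R"
    unfolding clinear_op_def R_def
    by (simp add: cinner_add_left cinner_scale_left vector_add_ldistrib vec_eq_iff sum_distrib_left
        distrib_left distrib_right sum.distrib algebra_simps)
  have RF: "R (F k) = complex_of_real (sqrt (c k)) *s F k" if k: "k < N" for k
  proof -
    have "R (F k) = (\<Sum>i<N. complex_of_real (sqrt (c k)) *s (complex_of_real (c i) * cinner (F k) (F i) *s F i))"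
      unfolding R_def
    proof (rule sum.cong)
      fix i assume "i \<in> {..<N}"
      hence i: "i < N" by simp
      show "complex_of_real (c i * sqrt (c i)) * cinner (F k) (F i) *s F i =
            complex_of_real (sqrt (c k)) *s (complex_of_real (c i) * cinner (F k) (F i) *s F i)"
      proof (cases "c i = c k")
        case True thus ?thesis by (simp add: mult.assoc mult.left_commute)
      next
        case False thus ?thesis using orth[OF i k False] by simp
      qed
    qed simp
    also have "\<dots> = complex_of_real (sqrt (c k)) *s (\<Sum>i<N. complex_of_real (c i) * cinner (F k) (F i) *s F i)"
      by (simp only: smult_sum)
    also have "\<dots> = complex_of_real (sqrt (c k)) *s F k"
      by (simp only: dualx[of "F k", symmetric])
    finally show ?thesis .
  qed
  have Rpos: "positive_op R"
    unfolding positive_op_def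
  proof (intro conjI allI Rlin)
    fix x
    have "cinner (R x) x = (\<Sum>i<N. complex_of_real (c i * sqrt (c i) * (cmod (cinner x (F i)))^2))"
      unfolding R_def cinner_sum_left[OF finite_lessThan] cinner_scale_left
    proof (rule sum.cong)
      fix i
      show "complex_of_real (c i * sqrt (c i)) * cinner x (F i) * cinner (F i) x =
        complex_of_real (c i * sqrt (c i) * (cmod (cinner x (F i)))^2)"
        by (simp only: of_real_mult complex_norm_square cinner_commute[of "F i" x] mult.assoc)
    qed simp
    also have "\<dots> = complex_of_real (\<Sum>i<N. c i * sqrt (c i) * (cmod (cinner x (F i)))^2)"
      by (simp only: of_real_sum)
    finally have e: "cinner (R x) x = complex_of_real (\<Sum>i<N. c i * sqrt (c i) * (cmod (cinner x (F i)))^2)" .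
    show "Im (cinner (R x) x) = 0" unfolding e by simp
    have "0 \<le> (\<Sum>i<N. c i * sqrt (c i) * (cmod (cinner x (F i)))^2)"
      by (rule sum_nonneg) (simp add: less_imp_le c0)
    thus "0 \<le> Re (cinner (R x) x)" unfolding e by simp
  qed
  have RR: "R (R x) = Si x" for x
  proof -
    have RRlin: "clinear_op (\<lambda>x. R (R x))" using Rlin unfolding clinear_op_def by simp
    have "R (R x) = (\<Sum>i<N. complex_of_real (c i) * cinner x (F i) *s R (R (F i)))"
      by (rule clin_expand[OF RRlin dualx])
    also have "\<dots> = (\<Sum>i<N. complex_of_real (c i) * cinner x (F i) *s (complex_of_real (c i) *s F i))"
    proof (rule sum.cong)
      fix i assume "i \<in> {..<N}"
      hence i: "i < N" by simp
      have "R (R (F i)) = complex_of_real (sqrt (c i)) *s R (F i)"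
        using Rlin RF[OF i] unfolding clinear_op_def by simp
      also have "\<dots> = complex_of_real (c i) *s F i"
        using c0[OF i] by (simp add: RF[OF i] of_real_mult[symmetric])
      finally show "complex_of_real (c i) * cinner x (F i) *s R (R (F i)) =
        complex_of_real (c i) * cinner x (F i) *s (complex_of_real (c i) *s F i)" by simp
    qed simp
    finally have rr: "R (R x) = \<dots>" .
    have "S (R (R x)) = (\<Sum>i<N. S (complex_of_real (c i) * cinner x (F i) *s (complex_of_real (c i) *s F i)))"
      unfolding rr by (rule clin_sum[OF Slin finite_lessThan])
    also have "\<dots> = (\<Sum>i<N. complex_of_real (c i) * cinner x (F i) *s F i)"
    proof (rule sum.cong)
      fix i assume "i \<in> {..<N}"
      hence i: "i < N" by simp
      have "S (complex_of_real (c i) * cinner x (F i) *s (complex_of_real (c i) *s F i))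
          = complex_of_real (c i) * cinner x (F i) *s S (complex_of_real (c i) *s F i)"
        using Slin unfolding clinear_op_def by blast
      thus "S (complex_of_real (c i) * cinner x (F i) *s (complex_of_real (c i) *s F i))
          = complex_of_real (c i) * cinner x (F i) *s F i" by (simp only: SG0[OF i])
    qed simp
    also have "\<dots> = x" using dualx[of x] by simp
    finally have "S (R (R x)) = x" .
    hence "Si (S (R (R x))) = Si x" by simp
    thus ?thesis by (simp add: SiS)
  qed
  have uniq: "R' = R" if R': "positive_op R' \<and> (\<forall>x. R' (R' x) = Si x)" for R'
  proof -
    have R'lin: "clinear_op R'" using R' unfolding positive_op_def by blast
    have R'F: "R' (F k) = complex_of_real (sqrt (c k)) *s F k" if k: "k < N" for k
    proof -
      define s where "s = sqrt (c k)"
      have s0: "s > 0" using c0[OF k] by (simp add: s_def)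
      have ss: "s * s = c k" using c0[OF k] by (simp add: s_def)
      define w where "w = R' (F k) - complex_of_real s *s F k"
      have RRk: "R' (R' (F k)) = complex_of_real (c k) *s F k"
        using R' struct[OF k] by (simp add: G0_def)
      have "R' w = R' (R' (F k)) - R' (complex_of_real s *s F k)"
        unfolding w_def by (rule clin_diff[OF R'lin])
      also have "\<dots> = complex_of_real (c k) *s F k - complex_of_real s *s R' (F k)"
        using R'lin unfolding clinear_op_def RRk by simp
      finally have Rw1: "R' w = complex_of_real (c k) *s F k - complex_of_real s *s R' (F k)" .
      have "R' w + complex_of_real s *s w
          = complex_of_real (c k) *s F k - (complex_of_real s * complex_of_real s) *s F k"
        unfolding Rw1 by (simp add: w_def vector_ssub_ldistrib vector_smult_assoc)
      also have "\<dots> = 0" by (simp add: ss[symmetric])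
      finally have "R' w + complex_of_real s *s w = 0" .
      hence "R' w = - (complex_of_real s *s w)" by (simp add: eq_neg_iff_add_eq_0)
      also have "\<dots> = complex_of_real (- s) *s w" by (simp add: vec_eq_iff)
      finally have Rw: "R' w = complex_of_real (- s) *s w" .
      have "Re (cinner (R' w) w) = - s * (norm w)^2"
        unfolding Rw cinner_scale_left cinner_self by simp
      moreover have "0 \<le> Re (cinner (R' w) w)" using R' unfolding positive_op_def by blast
      ultimately have "(norm w)^2 \<le> 0" using s0 by (simp add: mult_le_0_iff)
      hence "w = 0" by simp
      thus ?thesis by (simp add: w_def s_def)
    qed
    show ?thesis
    proof
      fix x
      have "R' x = (\<Sum>i<N. complex_of_real (c i) * cinner x (F i) *s R' (F i))"
        by (rule clin_expand[OF R'lin dualx])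
      also have "\<dots> = (\<Sum>i<N. complex_of_real (c i) * cinner x (F i) *s R (F i))"
        by (rule sum.cong) (simp_all add: R'F RF)
      also have "\<dots> = R x"
        by (rule clin_expand[OF Rlin dualx, symmetric])
      finally show "R' x = R x" .
    qed
  qed
  have sq: "frame_op_inv_sqrt N F = R"
    unfolding frame_op_inv_sqrt_def Si_def[symmetric]
    by (rule the_equality) (use Rpos RR uniq in auto)
  define h where "h = (\<lambda>i. frame_op_inv_sqrt N F (F i))"
  have h: "h i = complex_of_real (sqrt (c i)) *s F i" if "i < N" for i
    using RF[OF that] by (simp add: h_def sq)
  have dh: "is_dual N h h"
    unfolding is_dual_def
  proof
    fix x
    have "x = (\<Sum>i<N. complex_of_real (c i) * cinner x (F i) *s F i)" by (rule dualx)
    also have "\<dots> = (\<Sum>i<N. cinner x (h i) *s h i)"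
    proof (rule sum.cong)
      fix i assume "i \<in> {..<N}"
      hence i: "i < N" by simp
      have "complex_of_real (sqrt (c i)) * complex_of_real (sqrt (c i)) = complex_of_real (c i)"
        using c0[OF i] by (simp flip: of_real_mult)
      thus "complex_of_real (c i) * cinner x (F i) *s F i = cinner x (h i) *s h i"
        by (simp add: h[OF i] cinner_scale_right algebra_simps)
    qed simp
    finally show "x = (\<Sum>i<N. cinner x (h i) *s h i)" .
  qed
  have par: "is_parseval N h" by (rule dual_parseval[OF dh])
  have frh: "is_frame N h" by (rule parseval_frame[OF par])
  have nh: "norm (h i) = sqrt r" if i: "i < N" for i
  proof -
    have "norm (h i) = sqrt (c i) * norm (F i)" using c0[OF i] by (simp add: h[OF i] norm_smult_vec)
    also have "\<dots> = sqrt r"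
      using struct[OF i] by (simp add: c_def real_sqrt_divide)
    finally show ?thesis .
  qed
  have en: "is_equal_norm N h" unfolding is_equal_norm_def using nh by simp
  have p2: "\<forall>G. in_N1 N F G \<longrightarrow> (\<forall>i<N. G i = frame_op_inv N F (F i))"
  proof (intro allI impI)
    fix G i assume G: "in_N1 N F G" and i: "i < N"
    have "G i = complex_of_real (c i) *s F i"
      using N1_struct[OF card G i] by (simp add: c_def r_def)
    also have "\<dots> = frame_op_inv N F (F i)" using struct[OF i] by (simp add: G0_def Si_def)
    finally show "G i = frame_op_inv N F (F i)" .
  qed
  show ?thesis using frh par en p2 unfolding h_def by blast
qed


end
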